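(* Let $p\ge1$, let $T\subset\mathbb{R}^{\lfloor p\rfloor}$ be a bounded set whose linear span is $\mathbb{R}^{\lfloor p\rfloor}$, and let $Z_1,\dots,Z_{\lfloor p\rfloor}$ be arbitrary random variables. Then $$\mathbb{E}\sup_{x\in T}\Big|\sum_{i\le p}x_iZ_i\Big|\le\Big(\mathbb{E}\sup_{x\in T}\Big|\sum_{i\le p}x_iZ_i\Big|^p\Big)^{1/p}\le10\sup_{x\in T}\Big\|\sum_{i\le p}x_iZ_i\Big\|_p.$$
   Context: $\|Z\|_p=(\mathbb{E}|Z|^p)^{1/p}$. *)

theory Defs
  imports "HOL-Analysis.Analysis" "HOL-Probability.Probability"
begin

(* a powr q for extended nonnegative reals, intended for q > 0: \<infinity> powr q = \<infinity> *)
definition enn_powr :: "ennreal \<Rightarrow> real \<Rightarrow> ennreal" where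
  "enn_powr a q = (if a = \<top> then \<top> else ennreal (enn2real a powr q))"

definition Lp_norm :: "'a measure \<Rightarrow> real \<Rightarrow> ('a \<Rightarrow> real) \<Rightarrow> ennreal" where
  "Lp_norm M p f = enn_powr (\<integral>\<^sup>+ \<omega>. ennreal (\<bar>f \<omega>\<bar> powr p) \<partial>M) (1 / p)"

end

theory Submission imports Defs begin


lemma tangent_powr:
  fixes a c p :: real
  assumes "a \<ge> 0" "c > 0" "p \<ge> 1"
  shows "a \<le> c + (a powr p - c powr p) / (p * c powr (p - 1))"
proof -
  have pos: "p * c powr (p - 1) > 0" using assms by auto
  have key: "a powr p - c powr p \<ge> p * c powr (p - 1) * (a - c)"
  proof (cases "a = 0")
    case True
    have "c powr p = c * c powr (p - 1)" using assms by (simp add: powr_mult_base)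
    then have "p * c powr (p - 1) * (0 - c) \<le> 0 - c powr p"
      using assms pos by (simp add: algebra_simps mult_right_mono)
    then show ?thesis using True assms by simp
  next
    case False
    then have a0: "a > 0" using assms by simp
    show ?thesis
    proof (rule convex_on_imp_above_tangent[OF powr_convex[OF assms(3)]])
      show "connected {0::real<..}" by simp
      show "c \<in> interior {0<..}" using assms by (simp add: interior_open)
      show "a \<in> {0<..}" using a0 by simp
      show "((\<lambda>x. x powr p) has_field_derivative p * c powr (p - 1)) (at c within {0<..})"
        using assms by (auto intro!: derivative_eq_intros)
    qed
  qed
  have "a - c \<le> (a powr p - c powr p) / (p * c powr (p - 1))"
    using key pos by (simp add: pos_le_divide_eq mult.commute)
  then show ?thesis by simp
qed

lemma first_ineq:
  fixes F :: "'a \<Rightarrow> real"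
  assumes "prob_space M" and Fm: "F \<in> borel_measurable M" and F0: "\<And>\<omega>. F \<omega> \<ge> 0" and p: "p \<ge> 1"
  shows "(\<integral>\<^sup>+ \<omega>. ennreal (F \<omega>) \<partial>M) \<le> enn_powr (\<integral>\<^sup>+ \<omega>. ennreal (F \<omega> powr p) \<partial>M) (1 / p)"
proof -
  interpret prob_space M by fact
  have Fpm: "(\<lambda>\<omega>. F \<omega> powr p) \<in> borel_measurable M" using Fm by measurable
  show ?thesis
  proof (cases "(\<integral>\<^sup>+ \<omega>. ennreal (F \<omega> powr p) \<partial>M) = \<top>")
    case True
    then show ?thesis by (simp add: enn_powr_def)
  next
    case False
    then obtain J where J: "(\<integral>\<^sup>+ \<omega>. ennreal (F \<omega> powr p) \<partial>M) = ennreal J" "J \<ge> 0"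
      by (metis enn2real_nonneg ennreal_enn2real_if)
    have rhs: "enn_powr (\<integral>\<^sup>+ \<omega>. ennreal (F \<omega> powr p) \<partial>M) (1 / p) = ennreal (J powr (1/p))"
      using J by (simp add: enn_powr_def)
    have intp: "integrable M (\<lambda>\<omega>. F \<omega> powr p)"
      using Fpm J by (intro integrableI_nn_integral_finite) auto
    have intJ: "(\<integral>\<omega>. F \<omega> powr p \<partial>M) = J"
      using Fpm J by (subst integral_eq_nn_integral) auto
    show ?thesis
    proof (cases "J = 0")
      case True
      then have "AE \<omega> in M. ennreal (F \<omega> powr p) = 0"
        using J Fpm by (subst nn_integral_0_iff_AE[symmetric]) auto
      then have "AE \<omega> in M. ennreal (F \<omega>) = 0"
        by eventually_elim (use F0 in auto)
      then have "(\<integral>\<^sup>+ \<omega>. ennreal (F \<omega>) \<partial>M) = 0"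
        using Fm by (subst nn_integral_0_iff_AE) auto
      then show ?thesis by simp
    next
      case False
      then have Jp: "J > 0" using J by simp
      define c where "c = J powr (1/p)"
      have c0: "c > 0" using Jp by (simp add: c_def)
      have cp: "c powr p = J" using Jp p by (simp add: c_def powr_powr)
      define h where "h \<omega> = c + (F \<omega> powr p - c powr p) / (p * c powr (p - 1))" for \<omega>
      have hint: "integrable M h" unfolding h_def using intp by auto
      have Fh: "F \<omega> \<le> h \<omega>" for \<omega> unfolding h_def using tangent_powr[OF F0 c0 p] .
      have "(\<integral>\<^sup>+ \<omega>. ennreal (F \<omega>) \<partial>M) \<le> (\<integral>\<^sup>+ \<omega>. ennreal (h \<omega>) \<partial>M)"
        using Fh by (intro nn_integral_mono ennreal_leI) auto
      also have "\<dots> = ennreal (\<integral>\<omega>. h \<omega> \<partial>M)"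
        using hint Fh F0 by (intro nn_integral_eq_integral) (auto intro: order_trans)
      also have "(\<integral>\<omega>. h \<omega> \<partial>M) = c + (J - c powr p) / (p * c powr (p - 1))"
        unfolding h_def using intp intJ by (simp add: integral_diff prob_space)
      also have "\<dots> = c" using cp by simp
      finally show ?thesis using rhs c_def by simp
    qed
  qed
qed
lemma packing_bound:
  fixes K :: "(real ^ 'n) set" and N :: "(real ^ 'n) set"
  assumes cK: "convex K" and bK: "bounded K" and iK: "interior K \<noteq> {}"
    and sym: "\<And>y. y \<in> K \<Longrightarrow> - y \<in> K"
    and NK: "N \<subseteq> K" and fN: "finite N"
    and sep: "\<And>x y. x \<in> N \<Longrightarrow> y \<in> N \<Longrightarrow> x \<noteq> y \<Longrightarrow> 2 *\<^sub>R (x - y) \<notin> K"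
  shows "real (card N) \<le> 5 ^ CARD('n)"
proof -
  define B where "B x = (\<lambda>y. x + (1/4::real) *\<^sub>R y) ` K" for x
  define C where "C = (\<lambda>y. (5/4::real) *\<^sub>R y + 0) ` K"
  have Klm: "K \<in> lmeasurable" using cK bK by (rule measurable_convex)
  have Bsub: "B x \<subseteq> C" if "x \<in> N" for x
  proof
    fix z assume "z \<in> B x"
    then obtain k where k: "k \<in> K" "z = x + (1/4) *\<^sub>R k" unfolding B_def by auto
    have "(4/5::real) *\<^sub>R x + (1/5::real) *\<^sub>R k \<in> K"
      using convexD[OF cK, of x k "4/5" "1/5"] that NK k by auto
    moreover have "z = (5/4::real) *\<^sub>R ((4/5::real) *\<^sub>R x + (1/5::real) *\<^sub>R k) + 0"
      using k by (simp add: scaleR_add_right)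
    ultimately show "z \<in> C" unfolding C_def by blast
  qed
  have bC: "bounded C" unfolding C_def using bounded_scaling[OF bK, of "5/4"]
    by (simp add: image_def)
  have Bmeas: "B x \<in> sets lebesgue" if "x \<in> N" for x
  proof -
    have "convex (B x)" unfolding B_def by (rule convex_affinity[OF cK])
    moreover have "bounded (B x)" using Bsub[OF that] bC bounded_subset by blast
    ultimately show ?thesis using measurable_convex by (auto simp: fmeasurable_def)
  qed
  have Cmeas: "C \<in> sets lebesgue"
  proof -
    have "convex C" unfolding C_def using convex_affinity[OF cK, of 0 "5/4"] by simp
    then show ?thesis using bC measurable_convex by (auto simp: fmeasurable_def)
  qed
  have disj: "disjoint_family_on B N"
    unfolding disjoint_family_on_def
  proof (intro ballI impI)
    fix x y assume xy: "x \<in> N" "y \<in> N" "x \<noteq> y"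
    show "B x \<inter> B y = {}"
    proof (rule ccontr)
      assume "B x \<inter> B y \<noteq> {}"
      then obtain k1 k2 where k: "k1 \<in> K" "k2 \<in> K" "x + (1/4) *\<^sub>R k1 = y + (1/4) *\<^sub>R k2"
        unfolding B_def by auto
      have "(1/2::real) *\<^sub>R k2 + (1/2::real) *\<^sub>R (- k1) \<in> K"
        using convexD[OF cK, of k2 "-k1" "1/2" "1/2"] sym k by auto
      moreover have "2 *\<^sub>R (x - y) = (1/2::real) *\<^sub>R k2 + (1/2::real) *\<^sub>R (- k1)"
      proof -
        have "2 *\<^sub>R (x - y) = 2 *\<^sub>R ((x + (1/4::real) *\<^sub>R k1) - (y + (1/4::real) *\<^sub>R k1))"
          by simp
        also have "\<dots> = 2 *\<^sub>R ((y + (1/4::real) *\<^sub>R k2) - (y + (1/4::real) *\<^sub>R k1))"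
          by (simp only: k(3))
        also have "\<dots> = (1/2::real) *\<^sub>R k2 + (1/2::real) *\<^sub>R (- k1)"
          by (simp add: algebra_simps)
        finally show ?thesis .
      qed
      ultimately show False using sep[OF xy] by metis
    qed
  qed
  have mB: "emeasure lebesgue (B x) = ennreal ((1/4) ^ CARD('n)) * emeasure lebesgue K" for x
  proof -
    have "B x = (\<lambda>y. (1/4::real) *\<^sub>R y + x) ` K" unfolding B_def by (simp add: add.commute)
    then show ?thesis using emeasure_lebesgue_affine[of "1/4" x K] by simp
  qed
  have mC: "emeasure lebesgue C = ennreal ((5/4) ^ CARD('n)) * emeasure lebesgue K"
    unfolding C_def using emeasure_lebesgue_affine[of "5/4" 0 K] by simp
  have "(\<Sum>x\<in>N. emeasure lebesgue (B x)) = emeasure lebesgue (\<Union>(B ` N))"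
    using Bmeas disj fN by (intro sum_emeasure) auto
  also have "\<dots> \<le> emeasure lebesgue C"
    using Bsub Cmeas by (intro emeasure_mono) auto
  finally have ineq: "of_nat (card N) * (ennreal ((1/4) ^ CARD('n)) * emeasure lebesgue K)
      \<le> ennreal ((5/4) ^ CARD('n)) * emeasure lebesgue K"
    using mB mC by simp
  obtain m where m: "emeasure lebesgue K = ennreal m" "m > 0"
  proof -
    have "\<not> negligible K" using negligible_convex_interior[OF cK] iK by simp
    moreover have "K \<in> sets lebesgue" using Klm by (auto simp: fmeasurable_def)
    ultimately have "emeasure lebesgue K \<noteq> 0" using negligible_iff_emeasure0 by metis
    moreover have "emeasure lebesgue K < \<infinity>" using Klm by (auto simp: fmeasurable_def)
    ultimately have e: "emeasure lebesgue K = ennreal (measure lebesgue K)"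
      by (intro emeasure_eq_ennreal_measure) auto
    moreover have "measure lebesgue K \<noteq> 0" using e \<open>emeasure lebesgue K \<noteq> 0\<close> by auto
    ultimately show ?thesis using that measure_nonneg[of lebesgue K] by fastforce
  qed
  have "real (card N) * ((1/4) ^ CARD('n) * m) \<le> (5/4) ^ CARD('n) * m"
    using ineq m
    by (simp add: ennreal_mult'[symmetric] ennreal_of_nat_eq_real_of_nat ennreal_le_iff del: ennreal_mult')
  then have "real (card N) * (1/4) ^ CARD('n) \<le> (5/4) ^ CARD('n)"
    using m(2) by (simp add: mult.assoc[symmetric])
  then show ?thesis by (simp add: power_divide field_simps)
qed


theorem factA2:
  fixes M :: "'a measure" and p :: real
    and T :: "(real ^ 'n) set" and Z :: "'n \<Rightarrow> 'a \<Rightarrow> real"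
  assumes "prob_space M"
    and "p \<ge> 1"
    and "CARD('n) = nat \<lfloor>p\<rfloor>"
    and "bounded T"
    and "span T = UNIV"
    and "\<And>i. Z i \<in> borel_measurable M"
  shows "(\<integral>\<^sup>+ \<omega>. (SUP x\<in>T. ennreal \<bar>\<Sum>i\<in>UNIV. x $ i * Z i \<omega>\<bar>) \<partial>M)
           \<le> enn_powr (\<integral>\<^sup>+ \<omega>. enn_powr (SUP x\<in>T. ennreal \<bar>\<Sum>i\<in>UNIV. x $ i * Z i \<omega>\<bar>) p \<partial>M) (1 / p)
       \<and> enn_powr (\<integral>\<^sup>+ \<omega>. enn_powr (SUP x\<in>T. ennreal \<bar>\<Sum>i\<in>UNIV. x $ i * Z i \<omega>\<bar>) p \<partial>M) (1 / p)
           \<le> 10 * (SUP x\<in>T. Lp_norm M p (\<lambda>\<omega>. \<Sum>i\<in>UNIV. x $ i * Z i \<omega>))"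
proof -
  interpret prob_space M by fact
  note Zm[measurable] = assms(6)
  have p: "p \<ge> 1" by fact
  have dp: "real CARD('n) \<le> p" using assms(3) p by simp
  define g where "g x \<omega> = (\<Sum>i\<in>UNIV. x $ i * Z i \<omega>)" for x :: "real ^ 'n" and \<omega>
  define zv where "zv \<omega> = (\<chi> i. Z i \<omega>)" for \<omega>
  have g_inner: "g x \<omega> = x \<bullet> zv \<omega>" for x \<omega> unfolding g_def zv_def inner_vec_def by simp
  have gm[measurable]: "g x \<in> borel_measurable M" for x unfolding g_def by measurable
  have g_add: "g (x + y) \<omega> = g x \<omega> + g y \<omega>" for x y \<omega> by (simp add: g_inner inner_add_left)
  have g_scale: "g (c *\<^sub>R x) \<omega> = c * g x \<omega>" for c x \<omega> by (simp add: g_inner)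
  have g_neg: "g (- x) \<omega> = - g x \<omega>" for x \<omega> by (simp add: g_inner)
  define f where "f \<omega> = (SUP x\<in>T. ennreal \<bar>g x \<omega>\<bar>)" for \<omega>
  obtain Bd where Bd: "Bd > 0" "\<forall>x\<in>T. norm x \<le> Bd" using assms(4) bounded_pos by blast
  have Tne: "T \<noteq> {}"
  proof
    assume "T = {}" then have "span T = {0}" by simp
    with assms(5) have "(1::real^'n) = 0" by auto
    then show False by (simp add: vec_eq_iff)
  qed
  have fle: "f \<omega> \<le> ennreal (Bd * norm (zv \<omega>))" for \<omega>
    unfolding f_def
  proof (rule SUP_least)
    fix x assume "x \<in> T"
    have "\<bar>g x \<omega>\<bar> \<le> norm x * norm (zv \<omega>)" using Cauchy_Schwarz_ineq2 g_inner by simp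
    also have "\<dots> \<le> Bd * norm (zv \<omega>)" using Bd \<open>x\<in>T\<close> by (simp add: mult_right_mono)
    finally show "ennreal \<bar>g x \<omega>\<bar> \<le> ennreal (Bd * norm (zv \<omega>))" by (rule ennreal_leI)
  qed
  define R where "R \<omega> = enn2real (f \<omega>)" for \<omega>
  have fR: "f \<omega> = ennreal (R \<omega>)" for \<omega>
  proof -
    have "f \<omega> < \<top>" using fle[of \<omega>] by (rule le_less_trans) simp
    then show ?thesis unfolding R_def by simp
  qed
  have R0: "R \<omega> \<ge> 0" for \<omega> by (simp add: R_def)
  have gT: "\<bar>g x \<omega>\<bar> \<le> R \<omega>" if "x \<in> T" for x \<omega>
  proof -
    have "ennreal \<bar>g x \<omega>\<bar> \<le> f \<omega>" unfolding f_def using that by (rule SUP_upper)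
    then show ?thesis using fR R0 by (simp add: ennreal_le_iff)
  qed
  define K where "K = convex hull (T \<union> uminus ` T)"
  have cK: "convex K" unfolding K_def by simp
  have TK: "T \<subseteq> K" unfolding K_def by (meson hull_subset le_supE)
  have mTK: "uminus ` T \<subseteq> K" unfolding K_def by (meson hull_subset le_supE)
  have bK: "bounded K" unfolding K_def
    using assms(4) by (intro bounded_convex_hull bounded_Un[THEN iffD2]) (auto simp: bounded_uminus)
  have symK: "- y \<in> K" if "y \<in> K" for y
  proof -
    have "convex hull (T \<union> uminus ` T) \<subseteq> {y. - y \<in> K}"
    proof (rule hull_minimal)
      show "T \<union> uminus ` T \<subseteq> {y. - y \<in> K}" using TK mTK by auto
      show "convex {y. - y \<in> K}" unfolding convex_def
      proof (intro ballI allI impI)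
        fix x y :: "real^'n" and u v :: real
        assume "x \<in> {y. - y \<in> K}" "y \<in> {y. - y \<in> K}" "0 \<le> u" "0 \<le> v" "u + v = 1"
        then have "u *\<^sub>R (- x) + v *\<^sub>R (- y) \<in> K" using convexD[OF cK, of "-x" "-y" u v] by simp
        then show "u *\<^sub>R x + v *\<^sub>R y \<in> {y. - y \<in> K}" by (simp add: algebra_simps)
      qed
    qed
    then show ?thesis using that unfolding K_def[symmetric] by auto
  qed
  obtain t0 where t0: "t0 \<in> T" using Tne by auto
  have zK: "0 \<in> K"
  proof -
    have "(1/2::real) *\<^sub>R t0 + (1/2::real) *\<^sub>R (- t0) \<in> K"
      using convexD[OF cK, of t0 "-t0" "1/2" "1/2"] t0 TK symK by auto
    then show ?thesis by simp
  qed
  have iK: "interior K \<noteq> {}"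
  proof -
    have "0 \<in> affine hull K" using zK hull_subset[of K affine] by (rule subsetD[rotated])
    then have "affine hull K = span K" by (rule affine_hull_span_0)
    moreover have "span T \<subseteq> span K" using TK by (rule span_mono)
    ultimately have "affine hull K = UNIV" using assms(5) by auto
    then have "rel_interior K = interior K" by (rule rel_interior_interior)
    moreover have "rel_interior K \<noteq> {}" using rel_interior_eq_empty[OF cK] zK by auto
    ultimately show ?thesis by simp
  qed
  have gK: "\<bar>g y \<omega>\<bar> \<le> R \<omega>" if "y \<in> K" for y \<omega>
  proof -
    have "K \<subseteq> {y. \<bar>g y \<omega>\<bar> \<le> R \<omega>}" unfolding K_def
    proof (rule hull_minimal)
      show "T \<union> uminus ` T \<subseteq> {y. \<bar>g y \<omega>\<bar> \<le> R \<omega>}" using gT g_neg by auto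
      show "convex {y. \<bar>g y \<omega>\<bar> \<le> R \<omega>}" unfolding convex_def
      proof (intro ballI allI impI)
        fix x y :: "real^'n" and u v :: real
        assume a0: "x \<in> {y. \<bar>g y \<omega>\<bar> \<le> R \<omega>}" "y \<in> {y. \<bar>g y \<omega>\<bar> \<le> R \<omega>}" "0 \<le> u" "0 \<le> v" "u + v = 1"
        then have a: "\<bar>g x \<omega>\<bar> \<le> R \<omega>" "\<bar>g y \<omega>\<bar> \<le> R \<omega>" "0 \<le> u" "0 \<le> v" "u + v = 1" by auto
        have "\<bar>g (u *\<^sub>R x + v *\<^sub>R y) \<omega>\<bar> = \<bar>u * g x \<omega> + v * g y \<omega>\<bar>" by (simp add: g_add g_scale)
        also have "\<dots> \<le> u * \<bar>g x \<omega>\<bar> + v * \<bar>g y \<omega>\<bar>"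
          using a by (metis abs_mult abs_of_nonneg abs_triangle_ineq)
        also have "\<dots> \<le> u * R \<omega> + v * R \<omega>"
          using a by (intro add_mono mult_left_mono) auto
        also have "\<dots> = R \<omega>" using a(5) by (metis distrib_right mult_1)
        finally show "u *\<^sub>R x + v *\<^sub>R y \<in> {y. \<bar>g y \<omega>\<bar> \<le> R \<omega>}" by simp
      qed
    qed
    then show ?thesis using that by auto
  qed
  define P where "P = {N. N \<subseteq> T \<and> finite N \<and> (\<forall>x\<in>N. \<forall>y\<in>N. x \<noteq> y \<longrightarrow> 2 *\<^sub>R (x - y) \<notin> K)}"
  have cardP: "card N \<le> 5 ^ CARD('n)" if "N \<in> P" for N
  proof -
    have "real (card N) \<le> 5 ^ CARD('n)"
      using that TK by (intro packing_bound[OF cK bK iK symK]) (auto simp: P_def)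
    then have "real (card N) \<le> real (5 ^ CARD('n))" by simp
    then show ?thesis by (rule of_nat_le_iff[THEN iffD1])
  qed
  have "card ` P \<subseteq> {..5 ^ CARD('n)}" using cardP by blast
  then have finP: "finite (card ` P)" by (rule finite_subset) simp
  have "{} \<in> P" by (simp add: P_def)
  then have neP: "card ` P \<noteq> {}" by auto
  define n where "n = Max (card ` P)"
  obtain N where N: "N \<in> P" "card N = n" using Max_in[OF finP neP] unfolding n_def by auto
  have maxN: "card N' \<le> n" if "N' \<in> P" for N' unfolding n_def using finP that by simp
  have NT: "N \<subseteq> T" and fN: "finite N" using N by (auto simp: P_def)
  have cover: "\<exists>x\<in>N. 2 *\<^sub>R (z - x) \<in> K" if z: "z \<in> T" for z
  proof (rule ccontr)
    assume nc: "\<not> (\<exists>x\<in>N. 2 *\<^sub>R (z - x) \<in> K)"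
    have nc': "2 *\<^sub>R (x - z) \<notin> K" if "x \<in> N" for x
    proof
      assume "2 *\<^sub>R (x - z) \<in> K"
      then have "- (2 *\<^sub>R (x - z)) \<in> K" by (rule symK)
      then have "2 *\<^sub>R (z - x) \<in> K" by (simp add: algebra_simps)
      then show False using nc that by auto
    qed
    have zN: "z \<notin> N" using nc zK by auto
    have "insert z N \<in> P" using N z nc nc' unfolding P_def by auto
    then have "card (insert z N) \<le> n" by (rule maxN)
    then show False using zN fN N(2) by simp
  qed
  have Nne: "N \<noteq> {}" using cover[OF t0] by auto
  define m where "m \<omega> = Max ((\<lambda>x. \<bar>g x \<omega>\<bar>) ` N)" for \<omega>
  have mge: "\<bar>g x \<omega>\<bar> \<le> m \<omega>" if "x \<in> N" for x \<omega> unfolding m_def using fN that by simp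
  have m0: "m \<omega> \<ge> 0" for \<omega> using mge[of _ \<omega>] Nne by (meson abs_ge_zero all_not_in_conv order_trans)
  have Rb: "R \<omega> \<le> 2 * m \<omega>" for \<omega>
  proof -
    have "\<bar>g z \<omega>\<bar> \<le> m \<omega> + R \<omega> / 2" if zT: "z \<in> T" for z
    proof -
      obtain x where x: "x \<in> N" "2 *\<^sub>R (z - x) \<in> K" using cover[OF zT] by auto
      have "z = x + (1/2::real) *\<^sub>R (2 *\<^sub>R (z - x))" by simp
      then have "g z \<omega> = g x \<omega> + (1/2) * g (2 *\<^sub>R (z - x)) \<omega>"
        by (metis g_add g_scale)
      moreover have "\<bar>g (2 *\<^sub>R (z - x)) \<omega>\<bar> \<le> R \<omega>" using gK x(2) by blast
      moreover have "\<bar>g x \<omega>\<bar> \<le> m \<omega>" using mge x(1) by blast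
      ultimately show ?thesis by linarith
    qed
    then have "f \<omega> \<le> ennreal (m \<omega> + R \<omega> / 2)" unfolding f_def
      by (intro SUP_least ennreal_leI) auto
    then have "ennreal (R \<omega>) \<le> ennreal (m \<omega> + R \<omega> / 2)" using fR by simp
    then have "R \<omega> \<le> m \<omega> + R \<omega> / 2" using m0[of \<omega>] R0[of \<omega>] by (subst (asm) ennreal_le_iff) auto
    then show ?thesis by simp
  qed
  have enp: "enn_powr (f \<omega>) p = ennreal (R \<omega> powr p)" for \<omega> using R0[of \<omega>] by (simp add: fR enn_powr_def)
  have ptw: "enn_powr (f \<omega>) p \<le> ennreal (2 powr p) * (\<Sum>x\<in>N. ennreal (\<bar>g x \<omega>\<bar> powr p))" for \<omega>
  proof -
    have "m \<omega> \<in> (\<lambda>x. \<bar>g x \<omega>\<bar>) ` N" unfolding m_def using fN Nne by (intro Max_in) auto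
    then obtain x0 where x0: "x0 \<in> N" "m \<omega> = \<bar>g x0 \<omega>\<bar>" by auto
    have "R \<omega> powr p \<le> (2 * m \<omega>) powr p" using Rb R0 p by (intro powr_mono2) auto
    also have "\<dots> = 2 powr p * m \<omega> powr p" using m0 by (simp add: powr_mult)
    also have "\<dots> \<le> 2 powr p * (\<Sum>x\<in>N. \<bar>g x \<omega>\<bar> powr p)"
      using x0 fN member_le_sum[of x0 N "\<lambda>x. \<bar>g x \<omega>\<bar> powr p"] by (intro mult_left_mono) auto
    finally have "ennreal (R \<omega> powr p) \<le> ennreal (2 powr p * (\<Sum>x\<in>N. \<bar>g x \<omega>\<bar> powr p))"
      by (rule ennreal_leI)
    also have "\<dots> = ennreal (2 powr p) * (\<Sum>x\<in>N. ennreal (\<bar>g x \<omega>\<bar> powr p))"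
      by (simp add: ennreal_mult sum_ennreal sum_nonneg)
    finally show ?thesis by (simp add: enp)
  qed
  have I1: "(\<integral>\<^sup>+ \<omega>. enn_powr (f \<omega>) p \<partial>M)
      \<le> ennreal (2 powr p) * (\<Sum>x\<in>N. \<integral>\<^sup>+ \<omega>. ennreal (\<bar>g x \<omega>\<bar> powr p) \<partial>M)"
  proof -
    have "(\<integral>\<^sup>+ \<omega>. enn_powr (f \<omega>) p \<partial>M)
        \<le> (\<integral>\<^sup>+ \<omega>. ennreal (2 powr p) * (\<Sum>x\<in>N. ennreal (\<bar>g x \<omega>\<bar> powr p)) \<partial>M)"
      using ptw by (intro nn_integral_mono) auto
    also have "\<dots> = ennreal (2 powr p) * (\<integral>\<^sup>+ \<omega>. (\<Sum>x\<in>N. ennreal (\<bar>g x \<omega>\<bar> powr p)) \<partial>M)"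
      by (rule nn_integral_cmult) measurable
    also have "(\<integral>\<^sup>+ \<omega>. (\<Sum>x\<in>N. ennreal (\<bar>g x \<omega>\<bar> powr p)) \<partial>M)
        = (\<Sum>x\<in>N. \<integral>\<^sup>+ \<omega>. ennreal (\<bar>g x \<omega>\<bar> powr p) \<partial>M)"
      by (rule nn_integral_sum) measurable
    finally show ?thesis .
  qed
  define A where "A = (SUP x\<in>T. Lp_norm M p (g x))"
  have part2: "enn_powr (\<integral>\<^sup>+ \<omega>. enn_powr (f \<omega>) p \<partial>M) (1 / p) \<le> 10 * A"
  proof (cases "A = \<top>")
    case True
    then show ?thesis by simp
  next
    case False
    then obtain a where a: "A = ennreal a" "a \<ge> 0" by (metis enn2real_nonneg ennreal_enn2real_if)
    have Ix: "(\<integral>\<^sup>+ \<omega>. ennreal (\<bar>g x \<omega>\<bar> powr p) \<partial>M) \<le> ennreal (a powr p)" if "x \<in> T" for x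
    proof -
      have L: "Lp_norm M p (g x) \<le> ennreal a" using a that unfolding A_def by (metis SUP_upper)
      show ?thesis
      proof (cases "(\<integral>\<^sup>+ \<omega>. ennreal (\<bar>g x \<omega>\<bar> powr p) \<partial>M) = \<top>")
        case True
        then show ?thesis using L by (simp add: Lp_norm_def enn_powr_def top_unique)
      next
        case False
        then obtain r where r: "(\<integral>\<^sup>+ \<omega>. ennreal (\<bar>g x \<omega>\<bar> powr p) \<partial>M) = ennreal r" "r \<ge> 0"
          by (metis enn2real_nonneg ennreal_enn2real_if)
        have "r powr (1/p) \<le> a" using L r a by (simp add: Lp_norm_def enn_powr_def ennreal_le_iff)
        then have "(r powr (1/p)) powr p \<le> a powr p" using p by (intro powr_mono2) auto
        then have "r \<le> a powr p" using p r by (simp add: powr_powr)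
        then show ?thesis using r by (simp add: ennreal_leI)
      qed
    qed
    have "(\<Sum>x\<in>N. \<integral>\<^sup>+ \<omega>. ennreal (\<bar>g x \<omega>\<bar> powr p) \<partial>M) \<le> (\<Sum>x\<in>N. ennreal (a powr p))"
      using Ix NT by (intro sum_mono) auto
    also have "\<dots> = ennreal (real (card N) * a powr p)" by (simp add: ennreal_mult ennreal_of_nat_eq_real_of_nat)
    finally have S: "(\<Sum>x\<in>N. \<integral>\<^sup>+ \<omega>. ennreal (\<bar>g x \<omega>\<bar> powr p) \<partial>M) \<le> ennreal (real (card N) * a powr p)" .
    have "(\<integral>\<^sup>+ \<omega>. enn_powr (f \<omega>) p \<partial>M) \<le> ennreal (2 powr p) * ennreal (real (card N) * a powr p)"
      using I1 S by (meson mult_left_mono order_trans zero_le)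
    also have "\<dots> = ennreal (2 powr p * (real (card N) * a powr p))" by (simp add: ennreal_mult)
    finally have I2: "(\<integral>\<^sup>+ \<omega>. enn_powr (f \<omega>) p \<partial>M) \<le> ennreal (2 powr p * (real (card N) * a powr p))" .
    have cN: "real (card N) \<le> 5 powr p"
    proof -
      have "real (card N) \<le> 5 ^ CARD('n)" using of_nat_mono[OF cardP[OF N(1)], where 'a=real] by simp
      also have "(5::real) ^ CARD('n) = 5 powr real CARD('n)" by (simp add: powr_realpow)
      also have "\<dots> \<le> 5 powr p" using dp by (intro powr_mono) auto
      finally show ?thesis .
    qed
    define V where "V = (10 * a) powr p"
    have "2 powr p * (real (card N) * a powr p) \<le> 2 powr p * (5 powr p * a powr p)"
      using cN by (intro mult_left_mono mult_right_mono) auto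
    also have "\<dots> = V" unfolding V_def using a powr_mult[of 2 5 p] by (simp add: powr_mult)
    finally have I3: "(\<integral>\<^sup>+ \<omega>. enn_powr (f \<omega>) p \<partial>M) \<le> ennreal V"
      using I2 by (meson ennreal_leI order_trans)
    then obtain s where s: "(\<integral>\<^sup>+ \<omega>. enn_powr (f \<omega>) p \<partial>M) = ennreal s" "s \<ge> 0"
      by (metis enn2real_nonneg ennreal_enn2real_if ennreal_neq_top top_unique)
    have "s \<le> V" using s I3 by (simp add: V_def ennreal_le_iff)
    then have "s powr (1/p) \<le> V powr (1/p)" using s p by (intro powr_mono2) auto
    also have "V powr (1/p) = 10 * a" unfolding V_def using p a by (simp add: powr_powr)
    finally have sV: "s powr (1/p) \<le> 10 * a" .
    have "enn_powr (\<integral>\<^sup>+ \<omega>. enn_powr (f \<omega>) p \<partial>M) (1 / p) = ennreal (s powr (1/p))"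
      unfolding s(1) using s(2) by (simp add: enn_powr_def)
    also have "\<dots> \<le> ennreal (10 * a)" using sV by (rule ennreal_leI)
    also have "\<dots> = 10 * A" using a by (simp add: ennreal_mult)
    finally show ?thesis .
  qed
  have fm: "f \<in> borel_measurable M"
  proof -
    obtain D where D: "countable D" "D \<subseteq> T" "T \<subseteq> closure D" using separable by blast
    have fD: "f \<omega> = (SUP x\<in>D. ennreal \<bar>g x \<omega>\<bar>)" for \<omega>
    proof (rule antisym)
      define s where "s = (SUP x\<in>D. ennreal \<bar>g x \<omega>\<bar>)"
      have sf: "s \<le> f \<omega>" unfolding s_def f_def using D(2) by (rule SUP_subset_mono) simp
      then have sfin: "s = ennreal (enn2real s)" using fR
        by (metis ennreal_enn2real_if ennreal_neq_top top_unique)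
      have "closure D \<subseteq> {y. \<bar>y \<bullet> zv \<omega>\<bar> \<le> enn2real s}"
      proof (rule closure_minimal)
        show "D \<subseteq> {y. \<bar>y \<bullet> zv \<omega>\<bar> \<le> enn2real s}"
        proof
          fix x assume "x \<in> D"
          then have "ennreal \<bar>g x \<omega>\<bar> \<le> s" unfolding s_def by (rule SUP_upper)
          then have "\<bar>g x \<omega>\<bar> \<le> enn2real s" using sfin by (metis enn2real_nonneg ennreal_le_iff)
          then show "x \<in> {y. \<bar>y \<bullet> zv \<omega>\<bar> \<le> enn2real s}" by (simp add: g_inner)
        qed
        show "closed {y. \<bar>y \<bullet> zv \<omega>\<bar> \<le> enn2real s}"
          by (intro closed_Collect_le continuous_intros)
      qed
      then have "\<bar>g x \<omega>\<bar> \<le> enn2real s" if "x \<in> T" for x using D(3) that by (auto simp: g_inner)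
      then have "f \<omega> \<le> ennreal (enn2real s)" unfolding f_def by (intro SUP_least ennreal_leI)
      then show "f \<omega> \<le> s" using sfin by simp
      show "s \<le> f \<omega>" by (rule sf)
    qed
    show ?thesis unfolding fD using D(1) by (intro borel_measurable_SUP) measurable
  qed
  have Rm: "R \<in> borel_measurable M" unfolding R_def using fm by measurable
  have part1: "(\<integral>\<^sup>+ \<omega>. f \<omega> \<partial>M) \<le> enn_powr (\<integral>\<^sup>+ \<omega>. enn_powr (f \<omega>) p \<partial>M) (1 / p)"
  proof -
    have e1: "(\<lambda>\<omega>. enn_powr (f \<omega>) p) = (\<lambda>\<omega>. ennreal (R \<omega> powr p))" using enp by auto
    have e2: "f = (\<lambda>\<omega>. ennreal (R \<omega>))" using fR by auto
    show ?thesis unfolding e1 using first_ineq[OF assms(1) Rm R0 p] by (simp add: e2)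
  qed
  show ?thesis using part1 part2 unfolding f_def A_def g_def by blast
qed
end
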